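(* For every integer $n\ge 0$, \[ \sum_{k=0}^{n}(-4)^k\frac{\binom{n}{k}}{\binom{1+2k}{k}}\,k\,H_{1+2k} =\frac{2n\{H_{n}-2H_{1+2n}\}}{(4n^2-1)(2n-3)}+\frac{2n(8n^4+20n^3-2n^2-53n+8)}{(4n^2-1)^2(2n-3)^2}. \]
   Context: For an integer $m\ge 0$, $H_m$ denotes the $m$-th harmonic number: $H_0=0$ and $H_m=\sum_{j=1}^m \frac1j$ for $m\ge1$. $\binom{n}{k}$ is the usual binomial coefficient. *)

theory Defs
  imports "HOL-Analysis.Analysis"
begin

end

theory Submission
  imports Defs
begin

lemma b1: "real (m choose Suc k) * (real k + 1) = real (m choose k) * (real m - real k)"
proof (cases "k \<le> m")
  case True
  have "(m - k) * (m choose k) = (m choose Suc k) * Suc k"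
    using binomial_absorb_comp[of m k] binomial_absorption[of k m] by (simp add: mult.commute)
  then have "real ((m - k) * (m choose k)) = real ((m choose Suc k) * Suc k)" by simp
  then show ?thesis using True by (simp add: of_nat_diff algebra_simps)
next
  case False then show ?thesis by (simp add: binomial_eq_0)
qed
lemma b2: "real ((1 + 2*Suc k) choose Suc k) * (real k + 2) = 2 * (2 * real k + 3) * real ((1 + 2*k) choose k)"
proof -
  have s: "Suc (2*k) choose Suc k = Suc (2*k) choose k"
    using binomial_symmetric[of "Suc k" "Suc (2*k)"] by simp
  have p: "Suc (Suc (2*k)) choose Suc k = 2 * (Suc (2*k) choose k)"
    using binomial_Suc_Suc[of "Suc (2*k)" k] s by simp
  have a: "(Suc (Suc (Suc (2*k))) - Suc k) * (Suc (Suc (Suc (2*k))) choose Suc k) = Suc (Suc (Suc (2*k))) * (Suc (Suc (2*k)) choose Suc k)"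
    using binomial_absorb_comp[of "Suc (Suc (Suc (2*k)))" "Suc k"] by simp
  have e: "Suc (Suc (Suc (2*k))) - Suc k = k + 2" by simp
  have eq: "1 + 2*Suc k = Suc (Suc (Suc (2*k)))" by simp
  have "(k+2) * (Suc (Suc (Suc (2*k))) choose Suc k) = Suc (Suc (Suc (2*k))) * (2 * (Suc (2*k) choose k))"
    using a unfolding e p .
  then have "real ((k+2) * ((1 + 2*Suc k) choose Suc k)) = real (Suc (Suc (Suc (2*k))) * (2 * (Suc (2*k) choose k)))"
    unfolding eq by (simp only:)
  then show ?thesis by (simp add: algebra_simps)
qed
lemma h2: "harm (1 + 2 * Suc k) = (harm (1 + 2*k) :: real) + 1/(2*real k+2) + 1/(2*real k + 3)"
proof -
  have "1 + 2 * Suc k = Suc (Suc (1 + 2*k))" by simp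
  then show ?thesis by (simp add: harm_Suc field_simps)
qed
lemma b3: "real (n choose k) * (real n + 1) = real (Suc n choose k) * (real n + 1 - real k)"
proof (cases "k \<le> Suc n")
  case True
  have E: "(Suc n - k) * (Suc n choose k) = Suc n * (n choose k)"
    by (metis binomial_absorb_comp diff_Suc_1)
  have "real ((Suc n - k) * (Suc n choose k)) = real (Suc n * (n choose k))"
    by (simp only: E)
  then have "real (Suc n - k) * real (Suc n choose k) = real (Suc n) * real (n choose k)"
    by (simp only: of_nat_mult)
  then show ?thesis unfolding of_nat_diff[OF True] by (simp add: algebra_simps)
next
  case False then show ?thesis by (simp add: binomial_eq_0)
qed

definition tt :: "nat \<Rightarrow> nat \<Rightarrow> real" where
 "tt n k = (-4::real)^k * (real (n choose k) / real ((1 + 2*k) choose k)) * real k * harm (1 + 2*k)"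

definition qq :: "real \<Rightarrow> real \<Rightarrow> real" where
 "qq n k = (54*n+62*n^2-8*n^4) + (-24-22*n+48*n^2-24*n^3-32*n^4)*k + (-21-215*n-158*n^2-4*n^3+8*n^4)*k^2
   +(33+94*n+84*n^2+72*n^3+32*n^4)*k^3+(12+8*n-48*n^2-32*n^3)*k^4"

definition GG :: "nat \<Rightarrow> nat \<Rightarrow> real" where
 "GG n k = (-4::real)^k * real (Suc n choose k) / real ((1 + 2*k) choose k) *
    (real k * (2*real k+1) * (1 - real k) * harm (1 + 2*k)
     + qq (real n) (real k) / ((real k + 1) * (2*real n+3) * (4*(real n)^2-1) * (2*real n-3)))"

lemma combine:
  fixes x y D A B :: real
  assumes D: "D \<noteq> 0" and y: "y \<ge> 0"
  shows "2*(x+1-y)*(y+2)*y*(1/(2*y+2)+1/(2*y+3)) - 2*(x+1-y)*A/((y+1)*(2*y+3)*D) - B/((y+1)*D)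
      = (2*(x+1-y)*(y+2)*y*(4*y+5)*D - 4*(x+1-y)*A - 2*(2*y+3)*B) / (2*(y+1)*(2*y+3)*D)"
proof -
  have p: "y+1 \<noteq> 0" "2*y+3 \<noteq> 0" "2*y+2 \<noteq> 0" using y by auto
  define C where "C = 2*(y+1)*(2*y+3)*D"
  have C: "C \<noteq> 0" using p D unfolding C_def by simp
  have e1: "2*(x+1-y)*(y+2)*y*(1/(2*y+2)+1/(2*y+3)) * C = 2*(x+1-y)*(y+2)*y*(4*y+5)*D"
  proof -
    have q: "(2*y+2)*(2*y+3) \<noteq> 0" using p by simp
    have h1: "1/(2*y+2)+1/(2*y+3) = (4*y+5)/((2*y+2)*(2*y+3))" using p by (simp add: field_simps)
    have h2: "C = ((2*y+2)*(2*y+3))*D" unfolding C_def by (simp add: algebra_simps)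
    have h: "(1/(2*y+2)+1/(2*y+3)) * C = (4*y+5)*D" unfolding h1 h2 using q by simp
    have "2*(x+1-y)*(y+2)*y*(1/(2*y+2)+1/(2*y+3)) * C = 2*(x+1-y)*(y+2)*y*((1/(2*y+2)+1/(2*y+3)) * C)"
      by (simp only: mult.assoc)
    then show ?thesis unfolding h by (simp only: mult.assoc)
  qed
  have n2: "(y+1)*(2*y+3)*D \<noteq> 0" "(y+1)*D \<noteq> 0" using p D by auto
  have C2: "C = ((y+1)*(2*y+3)*D)*2" "C = ((y+1)*D)*(2*(2*y+3))" unfolding C_def by (simp_all add: algebra_simps)
  have e2: "2*(x+1-y)*A/((y+1)*(2*y+3)*D) * C = 4*(x+1-y)*A"
    unfolding C2(1) using n2(1) by simp
  have e3: "B/((y+1)*D) * C = 2*(2*y+3)*B"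
    unfolding C2(2) using n2(2) by simp
  have "(2*(x+1-y)*(y+2)*y*(1/(2*y+2)+1/(2*y+3)) - 2*(x+1-y)*A/((y+1)*(2*y+3)*D) - B/((y+1)*D)) * C
     = 2*(x+1-y)*(y+2)*y*(4*y+5)*D - 4*(x+1-y)*A - 2*(2*y+3)*B"
    unfolding left_diff_distrib e1 e2 e3 ..
  then show ?thesis using C unfolding C_def[symmetric] by (simp add: eq_divide_eq)
qed

lemma polyid: "2*(x+1-y)*(y+2)*y*(4*y+5)*((2*x+3) * (4*x^2-1) * (2*x-3)) - 4*(x+1-y)*qq x (y+1) - 2*(2*y+3)*qq x y = (0::real)"
  unfolding qq_def by algebra
lemma core:
  fixes x y h :: real
  assumes x: "x \<ge> 0" and D: "(2*x+3) * (4*x^2-1) * (2*x-3) \<noteq> 0" and y: "y \<ge> 0"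
  shows "x*(2*x+3)*(y*h) - (x+1)*(2*x-3)*((x+1-y)/(x+1)*y*h)
    = (2*(x+1-y)*(y+2)*y*(h+1/(2*y+2)+1/(2*y+3)) - 2*(x+1-y)*qq x (y+1)/((y+1)*(2*y+3)*((2*x+3) * (4*x^2-1) * (2*x-3))))
      - (y*(2*y+1)*(1-y)*h + qq x y/((y+1)*((2*x+3) * (4*x^2-1) * (2*x-3))))"
proof -
  define D where "D = (2*x+3) * (4*x^2-1) * (2*x-3)"
  have z: "2*(x+1-y)*(y+2)*y*(1/(2*y+2)+1/(2*y+3)) - 2*(x+1-y)*qq x (y+1)/((y+1)*(2*y+3)*D) - qq x y/((y+1)*D) = 0"
    unfolding combine[OF D[folded D_def] y] using polyid[of x y] unfolding D_def by simp
  have l: "(x+1)*(2*x-3)*((x+1-y)/(x+1)*y*h) = (2*x-3)*(x+1-y)*y*h" using x by simp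
  have "(2*(x+1-y)*(y+2)*y*(h+1/(2*y+2)+1/(2*y+3)) - 2*(x+1-y)*qq x (y+1)/((y+1)*(2*y+3)*D))
      - (y*(2*y+1)*(1-y)*h + qq x y/((y+1)*D))
     = (2*(x+1-y)*(y+2)*y*(1/(2*y+2)+1/(2*y+3)) - 2*(x+1-y)*qq x (y+1)/((y+1)*(2*y+3)*D) - qq x y/((y+1)*D))
       + (2*(x+1-y)*(y+2)*y - y*(2*y+1)*(1-y))*h"
    by (simp add: algebra_simps)
  also have "... = x*(2*x+3)*(y*h) - (2*x-3)*(x+1-y)*y*h" unfolding z by (simp add: algebra_simps)
  finally show ?thesis unfolding l D_def by simp
qed
lemma stepk: "real n * (2*real n+3) * tt (Suc n) k - (real n+1) * (2*real n-3) * tt n k = GG n (Suc k) - GG n k"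
proof -
  define X where "X = real (Suc n choose k)"
  define Y where "Y = real ((1 + 2*k) choose k)"
  define h where "h = (harm (1 + 2*k) :: real)"
  define z where "z = (-4::real)^k"
  define x where "x = real n"
  define y where "y = real k"
  define D where "D = (2*x+3) * (4*x^2-1) * (2*x-3)"
  have Ypos: "Y > 0" unfolding Y_def by simp
  have x0: "x \<ge> 0" and y0: "y \<ge> 0" unfolding x_def y_def by auto
  have c1: "real (n choose k) = X * (x + 1 - y) / (x + 1)"
    using b3[of n k] x0 unfolding X_def x_def y_def by (simp add: field_simps)
  have c2: "real (Suc n choose Suc k) = X * (x + 1 - y) / (y + 1)"
    using b1[of "Suc n" k] y0 unfolding X_def x_def y_def by (simp add: field_simps)
  have c3: "real ((1 + 2*Suc k) choose Suc k) = 2 * (2 * y + 3) * Y / (y + 2)"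
    using b2[of k] y0 unfolding Y_def y_def by (simp add: field_simps)
  have c4: "harm (1 + 2 * Suc k) = h + 1/(2*y+2) + 1/(2*y + 3)"
    using h2[of k] unfolding h_def y_def .
  have c5: "(-4::real)^(Suc k) = -4 * z" unfolding z_def by simp
  have n23: "2*n \<noteq> 3" "2*n \<noteq> 1" by presburger+
  have Dnz: "D \<noteq> 0"
  proof -
    have "2*x+3 \<noteq> 0" using x0 by simp
    moreover have "2*x-3 \<noteq> 0"
    proof
      assume "2*x-3 = 0" then have "real (2*n) = real 3" unfolding x_def by simp
      then have "2*n = 3" by (simp only: of_nat_eq_iff)
      then show False using n23 by simp
    qed
    moreover have "2*x-1 \<noteq> 0"
    proof
      assume "2*x-1 = 0" then have "real (2*n) = real 1" unfolding x_def by simp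
      then have "2*n = 1" by (simp only: of_nat_eq_iff)
      then show False using n23 by simp
    qed
    moreover have "4*x^2-1 = (2*x-1)*(2*x+1)" by (simp add: algebra_simps power2_eq_square)
    moreover have "2*x+1 \<noteq> 0" using x0 by simp
    ultimately show ?thesis unfolding D_def by simp
  qed
  have T1: "tt (Suc n) k = z*X/Y*(y*h)"
    unfolding tt_def X_def[symmetric] Y_def[symmetric] h_def[symmetric] z_def[symmetric] y_def[symmetric] by simp
  have T0: "tt n k = z*X/Y*((x+1-y)/(x+1)*y*h)"
    unfolding tt_def c1 Y_def[symmetric] h_def[symmetric] z_def[symmetric] y_def[symmetric]
    using x0 Ypos by (simp add: field_simps)
  have G0: "GG n k = z*X/Y*(y*(2*y+1)*(1-y)*h + qq x y/((y+1)*D))"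
    unfolding GG_def X_def[symmetric] Y_def[symmetric] h_def[symmetric] z_def[symmetric] y_def[symmetric] x_def[symmetric] D_def
    by (simp add: mult.assoc)
  have G1: "GG n (Suc k) = z*X/Y*(2*(x+1-y)*(y+2)*y*(h+1/(2*y+2)+1/(2*y+3)) - 2*(x+1-y)*qq x (y+1)/((y+1)*(2*y+3)*D))"
  proof -
    have "GG n (Suc k) = (-4*z) * (X * (x + 1 - y) / (y + 1)) / (2 * (2 * y + 3) * Y / (y + 2)) *
      ((y+1) * (2*(y+1)+1) * (1 - (y+1)) * (h + 1/(2*y+2) + 1/(2*y + 3))
       + qq x (y+1) / ((y+1+1) * D))"
      unfolding GG_def c2 c3 c4 c5 D_def x_def[symmetric] y_def[symmetric]
      by (simp add: mult.assoc y_def add_ac)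
    also have "... = z*X/Y*(2*(x+1-y)*(y+2)*y*(h+1/(2*y+2)+1/(2*y+3)) - 2*(x+1-y)*qq x (y+1)/((y+1)*(2*y+3)*D))"
    proof -
      define c where "c = -2*(x+1-y)*(y+2)/((y+1)*(2*y+3))"
      define H' where "H' = h+1/(2*y+2)+1/(2*y+3)"
      have p: "y+1 > 0" "2*y+3 > 0" "y+2 > 0" using y0 by auto
      have k: "(-4*z) * (X * (x + 1 - y) / (y + 1)) / (2 * (2 * y + 3) * Y / (y + 2)) = z*X/Y*c"
      proof -
        have l: "(-4*z) * (X * (x + 1 - y) / (y + 1)) / (2 * (2 * y + 3) * Y / (y + 2))
           = ((-4*z) * (X * (x + 1 - y)) * (y+2)) / ((y + 1) * (2 * (2 * y + 3) * Y))"
          by (simp add: divide_divide_eq_right times_divide_eq_right divide_divide_eq_left)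
        have r: "z*X/Y*c = (z*X*(-2*(x+1-y)*(y+2))) / (Y*((y+1)*(2*y+3)))"
          unfolding c_def by (simp add: times_divide_eq_right times_divide_eq_left divide_divide_eq_left)
        have m1: "(y + 1) * (2 * (2 * y + 3) * Y) \<noteq> 0" "Y*((y+1)*(2*y+3)) \<noteq> 0" using p Ypos by auto
        show ?thesis unfolding l r frac_eq_eq[OF m1] by algebra
      qed
      have a: "c * ((y+1) * (2*(y+1)+1) * (1 - (y+1)) * H') = 2*(x+1-y)*(y+2)*y*H'"
      proof -
        have e: "(y+1) * (2*(y+1)+1) * (1 - (y+1)) * H' = ((y+1)*(2*y+3)) * (-y*H')" by algebra
        have M: "(y+1)*(2*y+3) \<noteq> 0" using p by auto
        have "c * (((y+1)*(2*y+3)) * (-y*H')) = (-2*(x+1-y)*(y+2)) * (-y*H')"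
          unfolding c_def using M by simp
        then show ?thesis unfolding e by algebra
      qed
      have b: "c * (qq x (y+1) / ((y+1+1) * D)) = - (2*(x+1-y)*qq x (y+1)/((y+1)*(2*y+3)*D))"
      proof -
        have m1: "((y+1)*(2*y+3)) * ((y+1+1) * D) \<noteq> 0" "(y+1)*(2*y+3)*D \<noteq> 0" using p Dnz by auto
        have l: "c * (qq x (y+1) / ((y+1+1) * D)) = (-2*(x+1-y)*(y+2) * qq x (y+1)) / (((y+1)*(2*y+3)) * ((y+1+1) * D))"
          unfolding c_def by (rule times_divide_times_eq)
        have r: "- (2*(x+1-y)*qq x (y+1)/((y+1)*(2*y+3)*D)) = (- (2*(x+1-y)*qq x (y+1)))/((y+1)*(2*y+3)*D)"
          by simp
        show ?thesis unfolding l r frac_eq_eq[OF m1] by algebra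
      qed
      have "z*X/Y*c*((y+1) * (2*(y+1)+1) * (1 - (y+1)) * H' + qq x (y+1) / ((y+1+1) * D))
          = z*X/Y*(c*((y+1) * (2*(y+1)+1) * (1 - (y+1)) * H') + c*(qq x (y+1) / ((y+1+1) * D)))"
        by (simp only: mult.assoc[of "z*X/Y" c] distrib_left)
      also have "... = z*X/Y*(2*(x+1-y)*(y+2)*y*H' - 2*(x+1-y)*qq x (y+1)/((y+1)*(2*y+3)*D))"
        unfolding a b by simp
      finally show ?thesis unfolding k H'_def[symmetric] .
    qed
    finally show ?thesis .
  qed
  have "real n * (2*real n+3) * tt (Suc n) k - (real n+1) * (2*real n-3) * tt n k
     = z*X/Y * (x*(2*x+3)*(y*h) - (x+1)*(2*x-3)*((x+1-y)/(x+1)*y*h))"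
    unfolding T1 T0 x_def[symmetric] by algebra
  also have "... = z*X/Y * ((2*(x+1-y)*(y+2)*y*(h+1/(2*y+2)+1/(2*y+3)) - 2*(x+1-y)*qq x (y+1)/((y+1)*(2*y+3)*D))
      - (y*(2*y+1)*(1-y)*h + qq x y/((y+1)*D)))"
    using core[OF x0 Dnz[unfolded D_def] y0] unfolding D_def by simp
  also have "... = GG n (Suc k) - GG n k" unfolding G1 G0 by (simp add: algebra_simps)
  finally show ?thesis .
qed
definition Rf :: "real \<Rightarrow> real \<Rightarrow> real \<Rightarrow> real" where
 "Rf x a b = 2 * x * (a - 2 * b) / ((4 * x^2 - 1) * (2 * x - 3))
      + 2 * x * (8 * x^4 + 20 * x^3 - 2 * x^2 - 53 * x + 8) / ((4 * x^2 - 1)^2 * (2 * x - 3)^2)"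
lemma Rrec:
  fixes x a b :: real
  assumes x: "x \<ge> 0" and m: "2*x-1 \<noteq> 0" and r: "2*x-3 \<noteq> 0"
  shows "x*(2*x+3) * Rf (x+1) (a + 1/(x+1)) (b + 1/(2*x+2) + 1/(2*x+3)) - (x+1)*(2*x-3) * Rf x a b
    = -(54*x+62*x^2-8*x^4)/((2*x+3)*(4*x^2-1)*(2*x-3))"
proof -
  have f: "4*(x+1)^2-1 = (2*x+1)*(2*x+3)" "2*(x+1)-3 = 2*x-1" "4*x^2-1 = (2*x+1)*(2*x-1)"
    by (simp_all add: algebra_simps power2_eq_square)
  have nz: "2*x+1 \<noteq> 0" "2*x+3 \<noteq> 0" "x+1 \<noteq> 0" "2*x+2 \<noteq> 0" using x by auto
  have i: "(2*x+1) * inverse (2*x+1) = 1" "(2*x-1) * inverse (2*x-1) = 1" "(2*x+3) * inverse (2*x+3) = 1"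
    "(2*x-3) * inverse (2*x-3) = 1" "(x+1) * inverse (x+1) = 1" "(2*x+2) * inverse (2*x+2) = 1"
    using nz m r by auto
  show ?thesis
    unfolding Rf_def f divide_inverse inverse_mult_distrib power_inverse[symmetric] inverse_minus_eq
    using i by algebra
qed

lemma nz_nat: "2*real n - 1 \<noteq> 0" "2*real n - 3 \<noteq> 0"
proof -
  have n23: "2*n \<noteq> 3" "2*n \<noteq> 1" by presburger+
  show "2*real n - 1 \<noteq> 0"
  proof
    assume "2*real n-1 = 0" then have "real (2*n) = real 1" by simp
    then have "2*n = 1" by (simp only: of_nat_eq_iff)
    then show False using n23 by simp
  qed
  show "2*real n - 3 \<noteq> 0"
  proof
    assume "2*real n-3 = 0" then have "real (2*n) = real 3" by simp
    then have "2*n = 3" by (simp only: of_nat_eq_iff)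
    then show False using n23 by simp
  qed
qed

definition SS :: "nat \<Rightarrow> real" where "SS n = (\<Sum>k=0..n. tt n k)"

lemma Srec: "real n * (2*real n+3) * SS (Suc n) - (real n+1) * (2*real n-3) * SS n
   = -(54*real n+62*(real n)^2-8*(real n)^4)/((2*real n+3)*(4*(real n)^2-1)*(2*real n-3))"
proof -
  have e: "SS n = (\<Sum>k=0..Suc n. tt n k)"
    unfolding SS_def sum.atLeast0_atMost_Suc by (simp add: tt_def)
  have "real n * (2*real n+3) * SS (Suc n) - (real n+1) * (2*real n-3) * SS n
     = (\<Sum>k=0..Suc n. real n * (2*real n+3) * tt (Suc n) k - (real n+1) * (2*real n-3) * tt n k)"
    unfolding e unfolding SS_def by (simp only: sum_subtractf sum_distrib_left)
  also have "... = (\<Sum>k=0..Suc n. GG n (Suc k) - GG n k)" using stepk by simp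
  also have "... = GG n (Suc (Suc n)) - GG n 0" by (rule sum_Suc_diff) simp
  also have "GG n (Suc (Suc n)) = 0"
  proof -
    have "Suc n choose Suc (Suc n) = 0" by (simp add: binomial_eq_0)
    then show ?thesis unfolding GG_def by (simp del: binomial_Suc_Suc)
  qed
  finally have L: "real n * (2*real n+3) * SS (Suc n) - (real n+1) * (2*real n-3) * SS n = 0 - GG n 0" .
  have g: "GG n 0 = (54*real n+62*(real n)^2-8*(real n)^4)/((2*real n+3)*(4*(real n)^2-1)*(2*real n-3))"
    by (simp add: GG_def qq_def)
  show ?thesis unfolding L g by (simp only: diff_0)
qed

lemma harm3: "harm (3::nat) = (11/6::real)"
proof -
  have "harm (3::nat) = (harm 0 + inverse 1 + inverse 2 + inverse 3 :: real)"
    by (simp add: numeral_3_eq_3 harm_Suc)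
  moreover have "harm 0 = (0::real)" by (simp add: harm_def)
  ultimately show ?thesis by simp
qed

lemma harm3': "harm (Suc (Suc (Suc 0))) = (11/6::real)"
  using harm3 by (simp add: numeral_3_eq_3)

lemma main_eq: "SS n = Rf (real n) (harm n) (harm (1 + 2*n))"
proof (cases "n = 0")
  case True then show ?thesis by (simp add: SS_def tt_def Rf_def)
next
  case False
  then have "n \<ge> 1" by simp
  then show ?thesis
  proof (induction n rule: dec_induct)
    case base
    have "SS 1 = tt 1 0 + tt 1 1" unfolding SS_def by simp
    also have "... = -22/9" by (simp add: tt_def harm3 harm3')
    finally show ?case by (simp add: Rf_def harm3 harm3' harm_expand(2))
  next
    case (step n)
    define x where "x = real n"
    have x0: "x \<ge> 0" unfolding x_def by simp
    have xp: "x * (2*x+3) \<noteq> 0" using step(1) unfolding x_def by simp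
    have rs: "Rf (real (Suc n)) (harm (Suc n)) (harm (1 + 2*Suc n))
       = Rf (x+1) (harm n + 1/(x+1)) (harm (1+2*n) + 1/(2*x+2) + 1/(2*x+3))"
      unfolding h2 x_def by (simp add: harm_Suc add.commute divide_inverse)
    have A: "x*(2*x+3) * SS (Suc n) - (x+1)*(2*x-3) * SS n = -(54*x+62*x^2-8*x^4)/((2*x+3)*(4*x^2-1)*(2*x-3))"
      using Srec[of n] unfolding x_def .
    have B: "x*(2*x+3) * Rf (real (Suc n)) (harm (Suc n)) (harm (1 + 2*Suc n)) - (x+1)*(2*x-3) * Rf x (harm n) (harm (1+2*n))
       = -(54*x+62*x^2-8*x^4)/((2*x+3)*(4*x^2-1)*(2*x-3))"
      unfolding rs using Rrec[OF x0 nz_nat[of n, folded x_def]] .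
    have S3: "SS n = Rf x (harm n) (harm (1+2*n))" using step(3) unfolding x_def .
    have "x*(2*x+3) * SS (Suc n) - (x+1)*(2*x-3) * Rf x (harm n) (harm (1+2*n))
        = x*(2*x+3) * Rf (real (Suc n)) (harm (Suc n)) (harm (1 + 2*Suc n)) - (x+1)*(2*x-3) * Rf x (harm n) (harm (1+2*n))"
      using A[unfolded S3] B by (rule trans[OF _ sym])
    then have "x*(2*x+3) * SS (Suc n) = x*(2*x+3) * Rf (real (Suc n)) (harm (Suc n)) (harm (1 + 2*Suc n))"
      by linarith
    then show ?case using mult_left_cancel[OF xp] by blast
  qed
qed

theorem theorem5:
  fixes n :: nat
  shows "(\<Sum>k=0..n. (-4::real)^k * (real (n choose k) / real ((1 + 2*k) choose k)) * real k * harm (1 + 2*k))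
    = 2 * real n * (harm n - 2 * harm (1 + 2*n)) / ((4 * (real n)^2 - 1) * (2 * real n - 3))
      + 2 * real n * (8 * (real n)^4 + 20 * (real n)^3 - 2 * (real n)^2 - 53 * real n + 8)
        / ((4 * (real n)^2 - 1)^2 * (2 * real n - 3)^2)"
  using main_eq[of n] unfolding SS_def tt_def Rf_def .

end
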